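(* Let $P\in\mathcal{P}$ and $\alpha\in(0,1]$. Then $P^\alpha\subset\liminf_n P_n^\alpha$ almost surely.
   Context: $\mathcal{P}$ denotes the set of all probability measures on $(\mathbb{R}^d,\mathcal{B}_d)$, $\mathcal{B}_d$ the Borel $\sigma$-algebra, endowed with the topology of weak convergence. For $R\in\mathcal{P}$ and $\alpha\in(0,1]$, the $\alpha$-trimming of $R$ is $R^\alpha=\{Q\in\mathcal{P} : Q(B)\le \alpha^{-1}R(B)\text{ for all } B\in\mathcal{B}_d\}$. $\{X_i\}_{i\ge1}$ are i.i.d. random vectors in $\mathbb{R}^d$ with law $P$, and $P_n=\frac1n\sum_{i=1}^n\delta_{X_i}$ is the empirical probability. For sets $A_n\subset\mathcal{P}$, $\liminf_n A_n=\{Q\in\mathcal{P}:\exists\, Q_n\in A_n \text{ for all } n \text{ with } Q_n\to Q \text{ weakly}\}$ and $\limsup_n A_n=\{Q\in\mathcal{P}:\exists\, n_1<n_2<\dots,\ Q_{n_k}\in A_{n_k},\ Q_{n_k}\to Q\text{ weakly}\}$. *)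

theory Defs
  imports "HOL-Probability.Probability"
begin

definition probs :: "'a::euclidean_space measure set" where
  "probs = {Q. sets Q = sets borel \<and> prob_space Q}"

definition weak_conv :: "(nat \<Rightarrow> 'a::euclidean_space measure) \<Rightarrow> 'a measure \<Rightarrow> bool" where
  "weak_conv Qs Q \<longleftrightarrow>
     (\<forall>f :: 'a \<Rightarrow> real. continuous_on UNIV f \<and> bounded (range f) \<longrightarrow>
        (\<lambda>n. integral\<^sup>L (Qs n) f) \<longlonglongrightarrow> integral\<^sup>L Q f)"

definition trimming :: "real \<Rightarrow> 'a::euclidean_space measure \<Rightarrow> 'a measure set" where
  "trimming \<alpha> R = {Q \<in> probs. \<forall>B \<in> sets borel. measure Q B \<le> measure R B / \<alpha>}"

definition set_liminf :: "(nat \<Rightarrow> 'a::euclidean_space measure set) \<Rightarrow> 'a measure set" where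
  "set_liminf A = {Q \<in> probs. \<exists>Qs. (\<forall>n\<ge>1. Qs n \<in> A n) \<and> weak_conv Qs Q}"

definition empirical :: "(nat \<Rightarrow> 'w \<Rightarrow> 'a::euclidean_space) \<Rightarrow> nat \<Rightarrow> 'w \<Rightarrow> 'a measure" where
  "empirical X n \<omega> = distr (uniform_count_measure {..<n}) borel (\<lambda>i. X i \<omega>)"

end

theory Submission
  imports Defs
begin

lemma hoeff_step:
  fixes M :: "'w measure" and X :: "nat \<Rightarrow> 'w \<Rightarrow> 'a::euclidean_space"
  assumes pM: "prob_space M"
    and Xm: "\<And>i. X i \<in> borel_measurable M"
    and ind: "prob_space.indep_vars M (\<lambda>_. borel) X UNIV"
    and dX: "\<And>i. distr M borel (X i) = P"
    and A: "A \<in> sets borel" and n: "n > 0" and e: "e \<ge> 0"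
  shows "measure M {\<omega>\<in>space M. \<bar>(\<Sum>i\<in>{..<n}. indicator A (X i \<omega>)) / real n - measure P A\<bar> \<ge> e}
     \<le> 2 * exp (-2 * real n * e\<^sup>2)"
proof -
  interpret prob_space M by fact
  define Z where "Z = (\<lambda>i \<omega>. indicator A (X i \<omega>) :: real)"
  have Zm[measurable]: "Z i \<in> borel_measurable M" for i
    unfolding Z_def using Xm A by measurable
  have indZ: "indep_vars (\<lambda>_. borel) Z {..<n}"
  proof -
    have "indep_vars (\<lambda>_. borel) (\<lambda>i. indicator A \<circ> X i) UNIV"
      by (rule indep_vars_compose[OF ind]) (use A in auto)
    then have "indep_vars (\<lambda>_. borel) Z UNIV" unfolding Z_def by (simp add: o_def)
    then show ?thesis by (rule indep_vars_subset) auto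
  qed
  have dZ: "distr M borel (Z i) = distr M borel (Z 0)" for i
  proof -
    have "distr M borel (Z i) = distr (distr M borel (X i)) borel (indicator A)"
      unfolding Z_def using Xm A by (subst distr_distr) (auto simp: o_def)
    also have "\<dots> = distr (distr M borel (X 0)) borel (indicator A)" by (simp add: dX)
    also have "\<dots> = distr M borel (Z 0)"
      unfolding Z_def using Xm A by (subst distr_distr) (auto simp: o_def)
    finally show ?thesis .
  qed
  interpret H: Hoeffding_ineq_iid M "{..<n}" Z "Z 0" 0 1 "expectation (Z 0)"
  proof unfold_locales
    show "finite {..<n}" by simp
    show "indep_vars (\<lambda>_. borel) Z {..<n}" by (rule indZ)
    show "distr M borel (Z i) = distr M borel (Z 0)" for i by (rule dZ)
    show "random_variable borel (Z 0)" by (rule Zm)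
    show "AE x in M. Z 0 x \<in> {0..1}" by (rule AE_I2) (simp add: Z_def)
  qed (rule reflexive)
  have mu: "expectation (Z 0) = measure P A"
  proof -
    have "expectation (Z 0) = integral\<^sup>L (distr M borel (X 0)) (indicator A)"
      unfolding Z_def using Xm A by (subst integral_distr) auto
    also have "\<dots> = measure P A"
    proof -
      have "space P = UNIV" using dX[of 0] by (metis space_borel space_distr)
      then show ?thesis using A by (simp add: dX)
    qed
    finally show ?thesis .
  qed
  show ?thesis
  proof -
    have "prob {x\<in>space M. \<bar>(\<Sum>i\<in>{..<n}. Z i x) / real (card {..<n}) - measure P A\<bar> \<ge> e} \<le>
               2 * exp (-2 * real (card {..<n}) * e\<^sup>2 / (1 - 0)\<^sup>2)"
      using H.Hoeffding_ineq_abs_ge'[OF e zero_less_one] n unfolding mu by auto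
    then show ?thesis by (simp add: Z_def)
  qed
qed

lemma slln_ind:
  fixes M :: "'w measure" and X :: "nat \<Rightarrow> 'w \<Rightarrow> 'a::euclidean_space"
  assumes pM: "prob_space M"
    and Xm: "\<And>i. X i \<in> borel_measurable M"
    and ind: "prob_space.indep_vars M (\<lambda>_. borel) X UNIV"
    and dX: "\<And>i. distr M borel (X i) = P"
    and A: "A \<in> sets borel"
  shows "AE \<omega> in M. (\<lambda>n. (\<Sum>i<n. indicator A (X i \<omega>)) / real n) \<longlonglongrightarrow> measure P A"
proof -
  interpret prob_space M by fact
  define p where "p = measure P A"
  define S where "S n \<omega> = (\<Sum>i<n. indicator A (X i \<omega>)) / real n" for n \<omega>
  have Sm[measurable]: "S n \<in> borel_measurable M" for n
    unfolding S_def using Xm A by measurable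
  have ev: "AE \<omega> in M. eventually (\<lambda>n. \<bar>S n \<omega> - p\<bar> < 1 / Suc m) sequentially" for m
  proof -
    define e :: real where "e = 1 / Suc m"
    have e0: "e > 0" by (simp add: e_def)
    define B where "B n = {\<omega>\<in>space M. e \<le> \<bar>S (Suc n) \<omega> - p\<bar>}" for n
    have Bm[measurable]: "B n \<in> sets M" for n unfolding B_def by measurable
    define r where "r = exp (-2 * e\<^sup>2)"
    have r: "r < 1" "r \<ge> 0" using e0 by (auto simp: r_def)
    have bnd: "measure M (B n) \<le> 2 * r ^ Suc n" for n
    proof -
      have "measure M (B n) \<le> 2 * exp (-2 * real (Suc n) * e\<^sup>2)"
        unfolding B_def S_def p_def
        by (rule hoeff_step[OF pM Xm ind dX A]) (use e0 in auto)
      also have "exp (-2 * real (Suc n) * e\<^sup>2) = r ^ Suc n"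
        unfolding r_def by (subst exp_of_nat_mult[symmetric]) (simp add: algebra_simps)
      finally show ?thesis .
    qed
    have sg: "summable (\<lambda>n. 2 * r ^ Suc n)"
      using r by (intro summable_mult summable_Suc_iff[THEN iffD2] summable_geometric) auto
    have sm: "summable (\<lambda>n. measure M (B n))"
      by (rule summable_comparison_test'[OF sg]) (use bnd in auto)
    have "AE \<omega> in M. eventually (\<lambda>n. \<omega> \<in> space M - B n) sequentially"
      by (rule borel_cantelli_AE1) (use sm in \<open>auto simp: emeasure_eq_measure\<close>)
    then show ?thesis
    proof (rule AE_mp, intro AE_I2 impI)
      fix \<omega> assume \<omega>: "\<omega> \<in> space M" and ev1: "eventually (\<lambda>n. \<omega> \<in> space M - B n) sequentially"
      from ev1 have "eventually (\<lambda>n. \<bar>S (Suc n) \<omega> - p\<bar> < e) sequentially"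
        by eventually_elim (use \<omega> in \<open>auto simp: B_def\<close>)
      then show "eventually (\<lambda>n. \<bar>S n \<omega> - p\<bar> < 1 / Suc m) sequentially"
        unfolding e_def by (subst eventually_sequentially_Suc[symmetric]) simp
    qed
  qed
  have "AE \<omega> in M. \<forall>m. eventually (\<lambda>n. \<bar>S n \<omega> - p\<bar> < 1 / Suc m) sequentially"
    using ev by (simp add: AE_all_countable)
  then show ?thesis
  proof (rule AE_mp, intro AE_I2 impI)
    fix \<omega> assume H: "\<forall>m. eventually (\<lambda>n. \<bar>S n \<omega> - p\<bar> < 1 / Suc m) sequentially"
    show "(\<lambda>n. (\<Sum>i<n. indicator A (X i \<omega>)) / real n) \<longlonglongrightarrow> measure P A"
      unfolding tendsto_iff
    proof (intro allI impI)
      fix r :: real assume "r > 0"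
      then obtain m where m: "1 / Suc m < r"
        by (rule nat_approx_posE)
      from H[rule_format, of m] show "eventually (\<lambda>n. dist ((\<Sum>i<n. indicator A (X i \<omega>)) / real n) (measure P A) < r) sequentially"
        by eventually_elim (use m in \<open>auto simp: S_def p_def dist_real_def\<close>)
    qed
  qed
qed

lemma emp_meas_map: "(\<lambda>i. X i \<omega>) \<in> measurable (uniform_count_measure {..<n}) borel"
  by (simp add: measurable_count_space_eq1 cong: measurable_cong_sets)

lemma emp_sets[simp]: "sets (empirical X n \<omega>) = sets borel"
  by (simp add: empirical_def)

lemma emp_space[simp]: "space (empirical X n \<omega>) = UNIV"
  by (simp add: empirical_def)

lemma emp_prob: "n > 0 \<Longrightarrow> prob_space (empirical X n \<omega>)"
  unfolding empirical_def
  by (rule prob_space.prob_space_distr[OF prob_space_uniform_count_measure emp_meas_map]) auto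

lemma emp_probs: "n > 0 \<Longrightarrow> empirical X n \<omega> \<in> probs"
  using emp_prob by (auto simp: probs_def)

lemma emp_integral:
  assumes "f \<in> borel_measurable borel"
  shows "integral\<^sup>L (empirical X n \<omega>) f = (\<Sum>i<n. f (X i \<omega>)) / real n"
  unfolding empirical_def
  by (subst integral_distr[OF emp_meas_map assms]) (simp add: integral_uniform_count_measure)

lemma emp_measure:
  assumes "A \<in> sets borel"
  shows "measure (empirical X n \<omega>) A = (\<Sum>i<n. indicator A (X i \<omega>)) / real n"
proof -
  have "measure (empirical X n \<omega>) A = integral\<^sup>L (empirical X n \<omega>) (indicator A)"
    by simp
  also have "\<dots> = (\<Sum>i<n. indicator A (X i \<omega>)) / real n"
    by (rule emp_integral) (use assms in measurable)
  finally show ?thesis .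
qed

definition inbox :: "nat \<Rightarrow> 'a::euclidean_space \<Rightarrow> bool" where
  "inbox k x \<longleftrightarrow> (\<forall>b\<in>Basis. - real k \<le> x \<bullet> b \<and> x \<bullet> b < real k)"

definition cellf :: "nat \<Rightarrow> 'a::euclidean_space \<Rightarrow> ('a \<Rightarrow> int) option" where
  "cellf k x = (if inbox k x then Some (restrict (\<lambda>b. \<lfloor>2^k * (x \<bullet> b)\<rfloor>) Basis) else None)"

lemma floor_bounds:
  fixes t :: real
  assumes "- real k \<le> t" "t < real k"
  shows "\<lfloor>2^k * t\<rfloor> \<in> {- (int k * 2^k) .. int k * 2^k}"
proof -
  have "2^k * (- real k) \<le> 2^k * t" using assms(1) by (intro mult_left_mono) auto
  then have "- (real k * 2^k) \<le> 2^k * t" by (simp add: mult.commute)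
  then have "\<lfloor>- (real k * 2^k)\<rfloor> \<le> \<lfloor>2^k * t\<rfloor>" by (rule floor_mono)
  moreover have "\<lfloor>- (real k * 2^k)\<rfloor> = - (int k * 2^k)"
  proof -
    have "- (real k * 2^k) = real_of_int (- (int k * 2^k))" by simp
    then show ?thesis by (simp only: floor_of_int)
  qed
  moreover have "real_of_int \<lfloor>2^k * t\<rfloor> \<le> real k * 2^k"
  proof -
    have "2^k * t < 2^k * real k" using assms(2) by (intro mult_strict_left_mono) auto
    moreover have "real_of_int \<lfloor>2^k * t\<rfloor> \<le> 2^k * t" by (rule of_int_floor_le)
    ultimately show ?thesis by (simp only: mult.commute[of "real k"])
  qed
  then have "real_of_int \<lfloor>2^k * t\<rfloor> \<le> real_of_int (int k * 2^k)" by simp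
  then have "\<lfloor>2^k * t\<rfloor> \<le> int k * 2^k" by (simp only: of_int_le_iff)
  ultimately show ?thesis by auto
qed

lemma finite_cellf: "finite (range (cellf k :: 'a::euclidean_space \<Rightarrow> _))"
proof -
  have "range (cellf k :: 'a \<Rightarrow> _) \<subseteq> insert None (Some ` (Pi\<^sub>E (Basis::'a set) (\<lambda>_. {- (int k * 2^k) .. int k * 2^k})))"
  proof
    fix v assume "v \<in> range (cellf k :: 'a \<Rightarrow> _)"
    then obtain x :: 'a where v: "v = cellf k x" by auto
    show "v \<in> insert None (Some ` (Pi\<^sub>E (Basis::'a set) (\<lambda>_. {- (int k * 2^k) .. int k * 2^k})))"
    proof (cases "inbox k x")
      case True
      have "restrict (\<lambda>b. \<lfloor>2^k * (x \<bullet> b)\<rfloor>) Basis \<in> Pi\<^sub>E (Basis::'a set) (\<lambda>_. {- (int k * 2^k) .. int k * 2^k})"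
        using True unfolding restrict_PiE_iff inbox_def using floor_bounds by blast
      then show ?thesis using True v by (auto simp: cellf_def)
    qed (simp add: v cellf_def)
  qed
  moreover have "finite (insert None (Some ` (Pi\<^sub>E (Basis::'a set) (\<lambda>_. {- (int k * 2^k) .. int k * 2^k}))))"
    by (intro finite_insert[THEN iffD2] finite_imageI finite_PiE) auto
  ultimately show ?thesis by (rule finite_subset)
qed

lemma cellf_sets: "cellf k -` {v} \<in> sets (borel :: 'a::euclidean_space measure)"
proof (cases v)
  case None
  have "cellf k -` {v} = {x::'a. \<not> (\<forall>b\<in>Basis. - real k \<le> x \<bullet> b \<and> x \<bullet> b < real k)}"
    using None by (auto simp: cellf_def inbox_def split: if_splits)
  also have "\<dots> \<in> sets borel"
  proof -
    have "{x::'a. (\<forall>b\<in>Basis. - real k \<le> x \<bullet> b \<and> x \<bullet> b < real k)} \<in> sets borel"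
    proof -
      have "{x \<in> space borel. \<forall>b\<in>Basis. - real k \<le> (x::'a) \<bullet> b \<and> x \<bullet> b < real k} \<in> sets borel"
      proof (rule sets.sets_Collect_finite_All)
        fix b :: 'a
        have m: "(\<lambda>x::'a. x \<bullet> b) \<in> borel_measurable borel" by simp
        have "{x \<in> space borel. - real k \<le> (x::'a) \<bullet> b \<and> x \<bullet> b < real k} = (\<lambda>x. x \<bullet> b) -` {- real k..<real k}"
          by auto
        also have "\<dots> \<in> sets borel" using measurable_sets[OF m, of "{- real k..<real k}"] by simp
        finally show "{x \<in> space borel. - real k \<le> (x::'a) \<bullet> b \<and> x \<bullet> b < real k} \<in> sets borel" .
      qed simp
      then show ?thesis by simp
    qed
    then show ?thesis by (simp add: Collect_neg_eq sets.compl_sets[of _ borel, simplified])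
  qed
  finally show ?thesis .
next
  case (Some g)
  show ?thesis
  proof (cases "g \<in> extensional Basis")
    case False
    then have "cellf k -` {v} = {}"
      using Some by (auto simp: cellf_def split: if_splits)
    then show ?thesis by simp
  next
    case True
    have "cellf k -` {v} = {x::'a. \<forall>b\<in>Basis. (- real k \<le> x \<bullet> b \<and> x \<bullet> b < real k) \<and>
          (real_of_int (g b) \<le> 2^k * (x \<bullet> b) \<and> 2^k * (x \<bullet> b) < real_of_int (g b) + 1)}"
    proof (intro set_eqI)
      fix x :: 'a
      have ceq: "cellf k x = Some g \<longleftrightarrow> inbox k x \<and> (\<forall>b\<in>Basis. \<lfloor>2^k * (x \<bullet> b)\<rfloor> = g b)"
        using True unfolding cellf_def by (auto simp: restrict_def extensional_def fun_eq_iff)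
      have "x \<in> cellf k -` {v} \<longleftrightarrow> cellf k x = Some g" using Some by simp
      also have "\<dots> \<longleftrightarrow> (\<forall>b\<in>Basis. (- real k \<le> x \<bullet> b \<and> x \<bullet> b < real k) \<and>
          (real_of_int (g b) \<le> 2^k * (x \<bullet> b) \<and> 2^k * (x \<bullet> b) < real_of_int (g b) + 1))"
        unfolding ceq inbox_def floor_eq_iff by blast
      finally show "x \<in> cellf k -` {v} \<longleftrightarrow> x \<in> {x::'a. \<forall>b\<in>Basis. (- real k \<le> x \<bullet> b \<and> x \<bullet> b < real k) \<and>
          (real_of_int (g b) \<le> 2^k * (x \<bullet> b) \<and> 2^k * (x \<bullet> b) < real_of_int (g b) + 1)}" by simp
    qed
    also have "\<dots> \<in> sets borel"
    proof -
      have "{x \<in> space borel. \<forall>b\<in>Basis. (- real k \<le> (x::'a) \<bullet> b \<and> x \<bullet> b < real k) \<and>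
          (real_of_int (g b) \<le> 2^k * (x \<bullet> b) \<and> 2^k * (x \<bullet> b) < real_of_int (g b) + 1)} \<in> sets borel"
      proof (rule sets.sets_Collect_finite_All)
        fix b :: 'a
        have m: "(\<lambda>x::'a. x \<bullet> b) \<in> borel_measurable borel" by simp
        have "{x \<in> space borel. (- real k \<le> (x::'a) \<bullet> b \<and> x \<bullet> b < real k) \<and>
          (real_of_int (g b) \<le> 2^k * (x \<bullet> b) \<and> 2^k * (x \<bullet> b) < real_of_int (g b) + 1)} =
          (\<lambda>x. x \<bullet> b) -` ({- real k..<real k} \<inter> {real_of_int (g b) / 2^k ..< (real_of_int (g b) + 1) / 2^k})"
          by (auto simp: field_simps)
        also have "\<dots> \<in> sets borel"
          using measurable_sets[OF m, of "{- real k..<real k} \<inter> {real_of_int (g b) / 2^k ..< (real_of_int (g b) + 1) / 2^k}"]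
          by simp
        finally show "{x \<in> space borel. (- real k \<le> (x::'a) \<bullet> b \<and> x \<bullet> b < real k) \<and>
          (real_of_int (g b) \<le> 2^k * (x \<bullet> b) \<and> 2^k * (x \<bullet> b) < real_of_int (g b) + 1)} \<in> sets borel" .
      qed simp
      then show ?thesis by simp
    qed
    finally show ?thesis .
  qed
qed

lemma cellf_shrink:
  fixes x :: "'a::euclidean_space"
  assumes "e > 0"
  shows "\<exists>K. \<forall>k\<ge>K. \<forall>y. cellf k y = cellf k x \<longrightarrow> dist y x < e"
proof -
  obtain K1 :: nat where K1: "norm x < real K1" using reals_Archimedean2 by blast
  obtain K2 where K2: "(1/2::real) ^ K2 < e / DIM('a)"
    using real_arch_pow_inv[of "e / DIM('a)" "1/2"] assms by auto
  show ?thesis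
  proof (intro exI[of _ "max K1 K2"] allI impI)
    fix k y assume k: "max K1 K2 \<le> k" and c: "cellf k y = cellf k x"
    have ibx: "inbox k x"
      unfolding inbox_def
    proof
      fix b :: 'a assume b: "b \<in> Basis"
      have "\<bar>x \<bullet> b\<bar> \<le> norm x" by (rule Basis_le_norm[OF b])
      moreover have "real K1 \<le> real k" using k by simp
      ultimately show "- real k \<le> x \<bullet> b \<and> x \<bullet> b < real k" using K1 by linarith
    qed
    then have iby: "inbox k y" using c by (auto simp: cellf_def split: if_splits)
    have fl: "\<lfloor>2^k * (y \<bullet> b)\<rfloor> = \<lfloor>2^k * (x \<bullet> b)\<rfloor>" if b: "b \<in> Basis" for b :: 'a
    proof -
      have "restrict (\<lambda>b. \<lfloor>2^k * (y \<bullet> b)\<rfloor>) Basis b = restrict (\<lambda>b. \<lfloor>2^k * (x \<bullet> b)\<rfloor>) Basis b"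
        using c ibx iby by (simp add: cellf_def)
      then show ?thesis using b by simp
    qed
    have comp: "\<bar>(y - x) \<bullet> b\<bar> < (1/2)^k" if b: "b \<in> Basis" for b :: 'a
    proof -
      have "\<bar>2^k * (y \<bullet> b) - 2^k * (x \<bullet> b)\<bar> < 1"
        using fl[OF b] by linarith
      then have "2^k * \<bar>(y - x) \<bullet> b\<bar> < 1"
        by (simp add: inner_diff_left abs_mult right_diff_distrib[symmetric])
      then show ?thesis by (simp add: power_one_over field_simps)
    qed
    have "dist y x \<le> (\<Sum>b\<in>Basis. \<bar>(y - x) \<bullet> b\<bar>)"
      unfolding dist_norm by (rule norm_le_l1)
    also have "\<dots> < (\<Sum>b\<in>(Basis::'a set). (1/2)^k)"
      by (rule sum_strict_mono) (auto intro: comp)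
    also have "\<dots> = DIM('a) * (1/2)^k" by simp
    also have "\<dots> \<le> DIM('a) * (1/2)^K2"
      using k by (intro mult_left_mono power_decreasing) auto
    also have "\<dots> < DIM('a) * (e / DIM('a))"
      using K2 by (intro mult_strict_left_mono) auto
    also have "\<dots> = e" by simp
    finally show "dist y x < e" .
  qed
qed

lemma probs_space: "\<mu> \<in> probs \<Longrightarrow> space \<mu> = UNIV"
  unfolding probs_def by (metis (mono_tags, lifting) mem_Collect_eq sets_eq_imp_space_eq space_borel)

lemma probs_sets: "\<mu> \<in> probs \<Longrightarrow> sets \<mu> = sets borel"
  unfolding probs_def by auto

lemma probs_prob: "\<mu> \<in> probs \<Longrightarrow> prob_space \<mu>"
  unfolding probs_def by auto

lemma cell_fun_eq:
  fixes G :: "'c \<Rightarrow> real"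
  assumes "finite (range \<phi>)"
  shows "G (\<phi> x) = (\<Sum>v\<in>range \<phi>. G v * indicator (\<phi> -` {v}) x)"
proof -
  have "(\<Sum>v\<in>range \<phi>. G v * indicator (\<phi> -` {v}) x) = (\<Sum>v\<in>range \<phi>. if \<phi> x = v then G v else 0)"
    by (intro sum.cong) (auto simp: indicator_def)
  also have "\<dots> = G (\<phi> x)" by (simp add: assms)
  finally show ?thesis by simp
qed

lemma cell_integral:
  fixes \<phi> :: "'a::euclidean_space \<Rightarrow> 'c" and \<mu> :: "'a measure" and G :: "'c \<Rightarrow> real"
  assumes fin: "finite (range \<phi>)" and cs: "\<And>v. \<phi> -` {v} \<in> sets borel"
    and mu: "\<mu> \<in> probs"
  shows "integrable \<mu> (\<lambda>x. G (\<phi> x))"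
    and "integral\<^sup>L \<mu> (\<lambda>x. G (\<phi> x)) = (\<Sum>v\<in>range \<phi>. G v * measure \<mu> (\<phi> -` {v}))"
proof -
  interpret prob_space \<mu> using mu by (rule probs_prob)
  have eq: "(\<lambda>x. G (\<phi> x)) = (\<lambda>x. \<Sum>v\<in>range \<phi>. G v * indicator (\<phi> -` {v}) x)"
    using cell_fun_eq[OF fin] by blast
  have cs': "\<phi> -` {v} \<in> sets \<mu>" for v using cs probs_sets[OF mu] by simp
  have int: "integrable \<mu> (\<lambda>x. G v * indicator (\<phi> -` {v}) x)" for v
    by (intro integrable_mult_right integrable_real_indicator cs') (simp add: emeasure_eq_measure)
  show "integrable \<mu> (\<lambda>x. G (\<phi> x))" unfolding eq using int by simp
  have "integral\<^sup>L \<mu> (\<lambda>x. G (\<phi> x)) = (\<Sum>v\<in>range \<phi>. integral\<^sup>L \<mu> (\<lambda>x. G v * indicator (\<phi> -` {v}) x))"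
    unfolding eq using int by simp
  also have "\<dots> = (\<Sum>v\<in>range \<phi>. G v * measure \<mu> (\<phi> -` {v}))"
    by (intro sum.cong refl) (simp add: probs_space[OF mu])
  finally show "integral\<^sup>L \<mu> (\<lambda>x. G (\<phi> x)) = (\<Sum>v\<in>range \<phi>. G v * measure \<mu> (\<phi> -` {v}))" .
qed

lemma weak_conv_cells:
  fixes \<phi> :: "nat \<Rightarrow> 'a::euclidean_space \<Rightarrow> 'c" and \<mu> :: "nat \<Rightarrow> 'a measure"
  assumes fin: "\<And>k. finite (range (\<phi> k))" and cs: "\<And>k v. \<phi> k -` {v} \<in> sets borel"
    and shr: "\<And>x e. e > 0 \<Longrightarrow> \<exists>K. \<forall>k\<ge>K. \<forall>y. \<phi> k y = \<phi> k x \<longrightarrow> dist y x < e"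
    and mu: "\<And>n. \<mu> n \<in> probs" and Q: "Q \<in> probs"
    and kn: "filterlim kn at_top sequentially"
    and conv: "(\<lambda>n. \<Sum>v\<in>range (\<phi> (kn n)). \<bar>measure (\<mu> n) (\<phi> (kn n) -` {v}) - measure Q (\<phi> (kn n) -` {v})\<bar>) \<longlonglongrightarrow> 0"
  shows "weak_conv \<mu> Q"
  unfolding weak_conv_def
proof (intro allI impI, elim conjE)
  fix f :: "'a \<Rightarrow> real"
  assume cont: "continuous_on UNIV f" and bdd: "bounded (range f)"
  obtain B where B: "\<And>x. \<bar>f x\<bar> \<le> B"
    using bdd unfolding bounded_iff by auto
  have B0: "B \<ge> 0" using B[of 0] by linarith
  have B2: "\<bar>f y - f z\<bar> \<le> 2 * B" for y z using B[of y] B[of z] by linarith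
  have fm: "f \<in> borel_measurable borel" by (rule borel_measurable_continuous_onI[OF cont])
  have fint: "integrable \<nu> f" if "\<nu> \<in> probs" for \<nu>
  proof -
    interpret prob_space \<nu> using that by (rule probs_prob)
    show ?thesis
      by (rule integrable_const_bound[where B=B]) (use B fm probs_sets[OF that] in auto)
  qed
  define a where "a k v = (SOME y. \<phi> k y = v)" for k v
  define osc where "osc k v = (SUP y\<in>\<phi> k -` {v}. \<bar>f y - f (a k v)\<bar>)" for k v
  have a_in: "\<phi> k (a k (\<phi> k x)) = \<phi> k x" for k x
    unfolding a_def by (rule someI_ex) auto
  have bddA: "bdd_above ((\<lambda>y. \<bar>f y - f (a k v)\<bar>) ` S)" for k v S
    by (rule bdd_aboveI2[where M="2*B"]) (rule B2)
  have osc_up: "\<bar>f x - f (a k (\<phi> k x))\<bar> \<le> osc k (\<phi> k x)" for k x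
    unfolding osc_def by (rule cSUP_upper[OF _ bddA]) simp
  have osc_nn: "0 \<le> osc k (\<phi> k x)" for k x
    using osc_up[of x k] by linarith
  have osc_le: "osc k (\<phi> k x) \<le> 2 * B" for k x
    unfolding osc_def by (rule cSUP_least) (auto intro: B2)
  have osc_nn': "v \<in> range (\<phi> k) \<Longrightarrow> 0 \<le> osc k v" for k v using osc_nn by auto
  have osc_le': "v \<in> range (\<phi> k) \<Longrightarrow> osc k v \<le> 2 * B" for k v using osc_le by auto
  have est: "\<bar>integral\<^sup>L \<nu> f - (\<Sum>v\<in>range (\<phi> k). f (a k v) * measure \<nu> (\<phi> k -` {v}))\<bar>
      \<le> (\<Sum>v\<in>range (\<phi> k). osc k v * measure \<nu> (\<phi> k -` {v}))" if nu: "\<nu> \<in> probs" for \<nu> k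
  proof -
    note ci1 = cell_integral[OF fin[of k] cs[of k] nu, of "\<lambda>v. f (a k v)"]
    note ci2 = cell_integral[OF fin[of k] cs[of k] nu, of "osc k"]
    have "integral\<^sup>L \<nu> f - (\<Sum>v\<in>range (\<phi> k). f (a k v) * measure \<nu> (\<phi> k -` {v}))
        = integral\<^sup>L \<nu> (\<lambda>x. f x - f (a k (\<phi> k x)))"
      using ci1 fint[OF nu] by simp
    also have "\<bar>\<dots>\<bar> \<le> integral\<^sup>L \<nu> (\<lambda>x. osc k (\<phi> k x))"
      by (rule integral_abs_bound_integral) (use ci1 ci2 fint[OF nu] osc_up in auto)
    also have "\<dots> = (\<Sum>v\<in>range (\<phi> k). osc k v * measure \<nu> (\<phi> k -` {v}))"
      by (rule ci2(2))
    finally show ?thesis .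
  qed
  define I where "I k = (\<Sum>v\<in>range (\<phi> k). osc k v * measure Q (\<phi> k -` {v}))" for k
  define D where "D n = (\<Sum>v\<in>range (\<phi> (kn n)). \<bar>measure (\<mu> n) (\<phi> (kn n) -` {v}) - measure Q (\<phi> (kn n) -` {v})\<bar>)" for n
  have bound: "\<bar>integral\<^sup>L (\<mu> n) f - integral\<^sup>L Q f\<bar> \<le> 2 * I (kn n) + 3 * B * D n" for n
  proof -
    let ?k = "kn n"
    let ?R = "range (\<phi> ?k)"
    let ?m = "\<lambda>v. measure (\<mu> n) (\<phi> ?k -` {v})"
    let ?q = "\<lambda>v. measure Q (\<phi> ?k -` {v})"
    have e1: "\<bar>integral\<^sup>L (\<mu> n) f - (\<Sum>v\<in>?R. f (a ?k v) * ?m v)\<bar> \<le> (\<Sum>v\<in>?R. osc ?k v * ?m v)"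
      by (rule est[OF mu])
    have e2: "\<bar>integral\<^sup>L Q f - (\<Sum>v\<in>?R. f (a ?k v) * ?q v)\<bar> \<le> I ?k"
      unfolding I_def by (rule est[OF Q])
    have e3: "(\<Sum>v\<in>?R. osc ?k v * ?m v) \<le> I ?k + 2 * B * D n"
    proof -
      have "(\<Sum>v\<in>?R. osc ?k v * ?m v) = (\<Sum>v\<in>?R. osc ?k v * ?q v + osc ?k v * (?m v - ?q v))"
        by (intro sum.cong refl) (simp add: algebra_simps)
      also have "\<dots> = I ?k + (\<Sum>v\<in>?R. osc ?k v * (?m v - ?q v))"
        unfolding I_def by (simp add: sum.distrib)
      also have "(\<Sum>v\<in>?R. osc ?k v * (?m v - ?q v)) \<le> (\<Sum>v\<in>?R. 2 * B * \<bar>?m v - ?q v\<bar>)"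
      proof (rule sum_mono)
        fix v assume v: "v \<in> ?R"
        have "osc ?k v * (?m v - ?q v) \<le> osc ?k v * \<bar>?m v - ?q v\<bar>"
          using osc_nn'[OF v] by (intro mult_left_mono) auto
        also have "\<dots> \<le> 2 * B * \<bar>?m v - ?q v\<bar>"
          using osc_le'[OF v] by (intro mult_right_mono) auto
        finally show "osc ?k v * (?m v - ?q v) \<le> 2 * B * \<bar>?m v - ?q v\<bar>" .
      qed
      also have "(\<Sum>v\<in>?R. 2 * B * \<bar>?m v - ?q v\<bar>) = 2 * B * D n"
        unfolding D_def by (simp add: sum_distrib_left)
      finally show ?thesis by simp
    qed
    have e4: "\<bar>(\<Sum>v\<in>?R. f (a ?k v) * ?m v) - (\<Sum>v\<in>?R. f (a ?k v) * ?q v)\<bar> \<le> B * D n"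
    proof -
      have "\<bar>(\<Sum>v\<in>?R. f (a ?k v) * ?m v) - (\<Sum>v\<in>?R. f (a ?k v) * ?q v)\<bar>
          = \<bar>\<Sum>v\<in>?R. f (a ?k v) * (?m v - ?q v)\<bar>"
        by (simp add: sum_subtractf algebra_simps)
      also have "\<dots> \<le> (\<Sum>v\<in>?R. \<bar>f (a ?k v) * (?m v - ?q v)\<bar>)" by (rule sum_abs)
      also have "\<dots> \<le> (\<Sum>v\<in>?R. B * \<bar>?m v - ?q v\<bar>)"
        by (intro sum_mono) (simp add: abs_mult B mult_right_mono)
      also have "\<dots> = B * D n" unfolding D_def by (simp add: sum_distrib_left)
      finally show ?thesis .
    qed
    have "D n \<ge> 0" unfolding D_def by (intro sum_nonneg) auto
    show ?thesis using e1 e2 e3 e4 B0 by linarith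
  qed
  have Ilim: "I \<longlonglongrightarrow> 0"
  proof -
    have Ieq: "I k = integral\<^sup>L Q (\<lambda>x. osc k (\<phi> k x))" for k
      unfolding I_def by (rule cell_integral(2)[OF fin[of k] cs[of k] Q, symmetric])
    have "(\<lambda>k. integral\<^sup>L Q (\<lambda>x. osc k (\<phi> k x))) \<longlonglongrightarrow> integral\<^sup>L Q (\<lambda>x. 0)"
    proof (rule integral_dominated_convergence[where w="\<lambda>x. 2 * B"])
      show "(\<lambda>x. 0::real) \<in> borel_measurable Q" by simp
      show "(\<lambda>x. osc k (\<phi> k x)) \<in> borel_measurable Q" for k
        using cell_integral(1)[OF fin[of k] cs[of k] Q, of "osc k"] by (rule borel_measurable_integrable)
      show "integrable Q (\<lambda>x. 2 * B)"
      proof -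
        interpret prob_space Q using Q by (rule probs_prob)
        show ?thesis by simp
      qed
      show "AE x in Q. norm (osc k (\<phi> k x)) \<le> 2 * B" for k
        using osc_nn osc_le by (intro AE_I2) auto
      show "AE x in Q. (\<lambda>k. osc k (\<phi> k x)) \<longlonglongrightarrow> 0"
      proof (intro AE_I2)
        fix x :: 'a
        show "(\<lambda>k. osc k (\<phi> k x)) \<longlonglongrightarrow> 0"
        proof (rule LIMSEQ_I)
          fix r :: real assume r: "r > 0"
          have "isCont f x" using cont by (simp add: continuous_on_eq_continuous_at)
          then obtain d where d: "d > 0" "\<And>y. dist y x < d \<Longrightarrow> dist (f y) (f x) < r / 3"
            unfolding continuous_at_eps_delta using r by (metis zero_less_divide_iff zero_less_numeral)
          obtain K where K: "\<And>k y. k \<ge> K \<Longrightarrow> \<phi> k y = \<phi> k x \<Longrightarrow> dist y x < d"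
            using shr[OF d(1), of x] by blast
          have "norm (osc k (\<phi> k x) - 0) < r" if k: "k \<ge> K" for k
          proof -
            have "osc k (\<phi> k x) \<le> 2 * (r / 3)"
              unfolding osc_def
            proof (rule cSUP_least)
              show "\<phi> k -` {\<phi> k x} \<noteq> {}" by auto
              fix y assume y: "y \<in> \<phi> k -` {\<phi> k x}"
              have "dist (f y) (f x) < r / 3" using d(2) K[OF k] y by auto
              moreover have "dist (f (a k (\<phi> k x))) (f x) < r / 3" using d(2) K[OF k a_in] by auto
              ultimately show "\<bar>f y - f (a k (\<phi> k x))\<bar> \<le> 2 * (r / 3)"
                unfolding dist_real_def abs_less_iff abs_le_iff by linarith
            qed
            then show ?thesis using osc_nn[of k x] r by simp
          qed
          then show "\<exists>no. \<forall>k\<ge>no. norm (osc k (\<phi> k x) - 0) < r" by blast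
        qed
      qed
    qed
    moreover have "I = (\<lambda>k. integral\<^sup>L Q (\<lambda>x. osc k (\<phi> k x)))" by (rule ext, rule Ieq)
    ultimately show ?thesis by simp
  qed
  have "(\<lambda>n. I (kn n)) \<longlonglongrightarrow> 0" by (rule filterlim_compose[OF Ilim kn])
  then have lim: "(\<lambda>n. 2 * I (kn n) + 3 * B * D n) \<longlonglongrightarrow> 0"
    using conv unfolding D_def[symmetric] by (auto intro!: tendsto_eq_intros)
  have "(\<lambda>n. integral\<^sup>L (\<mu> n) f - integral\<^sup>L Q f) \<longlonglongrightarrow> 0"
    by (rule Lim_null_comparison[OF _ lim]) (use bound in auto)
  then show "(\<lambda>n. integral\<^sup>L (\<mu> n) f) \<longlonglongrightarrow> integral\<^sup>L Q f"
    by (rule LIM_zero_cancel)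
qed

lemma level_construct:
  fixes \<phi> :: "'a::euclidean_space \<Rightarrow> 'c" and Pn Q :: "'a measure" and \<alpha> :: real
  assumes fin: "finite (range \<phi>)" and cs: "\<And>v. \<phi> -` {v} \<in> sets borel"
    and Pn: "Pn \<in> probs" and Q: "Q \<in> probs" and a0: "0 < \<alpha>" and a1: "\<alpha> \<le> 1"
  defines "p \<equiv> \<lambda>v. measure Pn (\<phi> -` {v})"
    and "q \<equiv> \<lambda>v. measure Q (\<phi> -` {v})"
  defines "w \<equiv> \<lambda>v. min (q v) (p v / \<alpha>)"
  defines "W \<equiv> (\<Sum>v\<in>range \<phi>. w v)"
  defines "t \<equiv> (1 - W) / (1 / \<alpha> - W)"
  defines "m \<equiv> \<lambda>v. w v + t * (p v / \<alpha> - w v)"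
  defines "\<nu> \<equiv> density Pn (\<lambda>x. ennreal (m (\<phi> x) / p (\<phi> x)))"
  shows "\<nu> \<in> trimming \<alpha> Pn"
    and "\<And>v. measure \<nu> (\<phi> -` {v}) = m v"
    and "(\<Sum>v\<in>range \<phi>. \<bar>m v - q v\<bar>) \<le> 2 * (\<Sum>v\<in>range \<phi>. \<bar>w v - q v\<bar>)"
proof -
  let ?R = "range \<phi>"
  have sum1: "(\<Sum>v\<in>?R. measure \<mu> (\<phi> -` {v})) = 1" if mu: "\<mu> \<in> probs" for \<mu>
  proof -
    interpret prob_space \<mu> using mu by (rule probs_prob)
    have "integral\<^sup>L \<mu> (\<lambda>x. (\<lambda>_. 1::real) (\<phi> x)) = (\<Sum>v\<in>?R. 1 * measure \<mu> (\<phi> -` {v}))"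
      by (rule cell_integral(2)[OF fin cs mu])
    then show ?thesis using prob_space by simp
  qed
  have sumP: "(\<Sum>v\<in>?R. p v) = 1" unfolding p_def by (rule sum1[OF Pn])
  have sumQ: "(\<Sum>v\<in>?R. q v) = 1" unfolding q_def by (rule sum1[OF Q])
  have p0: "0 \<le> p v" for v unfolding p_def by simp
  have q0: "0 \<le> q v" for v unfolding q_def by simp
  have w0: "0 \<le> w v" for v unfolding w_def using p0[of v] q0[of v] a0 by simp
  have wq: "w v \<le> q v" for v unfolding w_def by simp
  have wp: "w v \<le> p v / \<alpha>" for v unfolding w_def by simp
  have W1: "W \<le> 1" unfolding W_def using sum_mono[of ?R w q] wq sumQ by simp
  have ia: "1 \<le> 1 / \<alpha>" using a0 a1 by simp
  have t0: "0 \<le> t" unfolding t_def using W1 ia by (intro divide_nonneg_nonneg) auto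
  have t1: "t \<le> 1"
  proof (cases "1 / \<alpha> - W = 0")
    case True then show ?thesis by (simp add: t_def)
  next
    case False
    then have "1 / \<alpha> - W > 0" using W1 ia by linarith
    then show ?thesis unfolding t_def using ia by (simp add: divide_le_eq_1)
  qed
  have tprod: "t * (1 / \<alpha> - W) = 1 - W"
  proof (cases "1 / \<alpha> - W = 0")
    case True then have "W = 1" using W1 ia by linarith
    then show ?thesis using True by (simp add: t_def)
  next
    case False then show ?thesis by (simp add: t_def)
  qed
  have sum_pa: "(\<Sum>v\<in>?R. p v / \<alpha> - w v) = 1 / \<alpha> - W"
    unfolding W_def by (simp add: sum_subtractf sum_divide_distrib[symmetric] sumP)
  have sumM: "(\<Sum>v\<in>?R. m v) = 1"
  proof -
    have "(\<Sum>v\<in>?R. m v) = W + t * (\<Sum>v\<in>?R. p v / \<alpha> - w v)"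
      unfolding m_def W_def by (simp add: sum.distrib sum_distrib_left)
    also have "\<dots> = 1" using tprod sum_pa by simp
    finally show ?thesis .
  qed
  have m0: "0 \<le> m v" for v
    unfolding m_def using w0[of v] wp[of v] t0 by simp
  have mp: "m v \<le> p v / \<alpha>" for v
  proof -
    have "m v = (1 - t) * w v + t * (p v / \<alpha>)" unfolding m_def by (simp add: algebra_simps)
    also have "\<dots> \<le> (1 - t) * (p v / \<alpha>) + t * (p v / \<alpha>)"
      using t0 t1 wp[of v] by (intro add_mono mult_left_mono) auto
    also have "\<dots> = p v / \<alpha>" by (simp add: algebra_simps add_divide_distrib[symmetric])
    finally show ?thesis .
  qed
  have mzero: "p v = 0 \<Longrightarrow> m v = 0" for v using m0[of v] mp[of v] by simp
  define D where "D v = m v / p v" for v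
  have D0: "0 \<le> D v" for v unfolding D_def using m0 p0 by simp
  have Da: "D v \<le> 1 / \<alpha>" for v
  proof (cases "p v = 0")
    case True then show ?thesis using ia a0 by (simp add: D_def)
  next
    case False then have "p v > 0" using p0[of v] by simp
    then show ?thesis unfolding D_def using mp[of v] a0 by (simp add: divide_le_eq field_simps)
  qed
  have Dp: "D v * p v = m v" for v
    by (cases "p v = 0") (auto simp: D_def mzero)
  have Pn_sets: "sets Pn = sets borel" by (rule probs_sets[OF Pn])
  have Dint: "integrable Pn (\<lambda>x. D (\<phi> x))" by (rule cell_integral(1)[OF fin cs Pn])
  have Dm[measurable]: "(\<lambda>x. D (\<phi> x)) \<in> borel_measurable Pn" using Dint by (rule borel_measurable_integrable)
  have \<nu>_eq: "\<nu> = density Pn (\<lambda>x. ennreal (D (\<phi> x)))" unfolding \<nu>_def D_def by simp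
  have meas: "measure \<nu> B = integral\<^sup>L Pn (\<lambda>x. D (\<phi> x) * indicator B x)" if B: "B \<in> sets borel" for B
  proof -
    have B': "B \<in> sets Pn" using B Pn_sets by simp
    have int: "integrable Pn (\<lambda>x. D (\<phi> x) * indicator B x)"
      using integrable_mult_indicator[OF B' Dint] by (simp add: mult.commute)
    have "emeasure \<nu> B = (\<integral>\<^sup>+ x. ennreal (D (\<phi> x)) * indicator B x \<partial>Pn)"
      unfolding \<nu>_eq by (rule emeasure_density) (auto simp: B')
    also have "\<dots> = (\<integral>\<^sup>+ x. ennreal (D (\<phi> x) * indicator B x) \<partial>Pn)"
      by (intro nn_integral_cong) (auto split: split_indicator)
    also have "\<dots> = ennreal (integral\<^sup>L Pn (\<lambda>x. D (\<phi> x) * indicator B x))"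
      by (rule nn_integral_eq_integral[OF int]) (intro AE_I2, simp add: D0)
    finally have "emeasure \<nu> B = ennreal (integral\<^sup>L Pn (\<lambda>x. D (\<phi> x) * indicator B x))" .
    moreover have "integral\<^sup>L Pn (\<lambda>x. D (\<phi> x) * indicator B x) \<ge> 0"
      by (rule Bochner_Integration.integral_nonneg) (simp add: D0)
    ultimately show ?thesis by (simp add: measure_def)
  qed
  have cellm: "measure \<nu> (\<phi> -` {v}) = m v" for v
  proof -
    have "measure \<nu> (\<phi> -` {v}) = integral\<^sup>L Pn (\<lambda>x. D (\<phi> x) * indicator (\<phi> -` {v}) x)"
      by (rule meas[OF cs])
    also have "\<dots> = integral\<^sup>L Pn (\<lambda>x. (\<lambda>u. D u * (if u = v then 1 else 0)) (\<phi> x))"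
      by (rule arg_cong[where f="integral\<^sup>L Pn"]) (auto simp: fun_eq_iff indicator_def)
    also have "\<dots> = (\<Sum>u\<in>?R. D u * (if u = v then 1 else 0) * p u)"
      unfolding p_def by (rule cell_integral(2)[OF fin cs Pn])
    also have "\<dots> = (\<Sum>u\<in>?R. if u = v then m u else 0)"
      by (intro sum.cong refl) (simp add: Dp)
    also have "\<dots> = (if v \<in> ?R then m v else 0)"
      using fin by (simp add: sum.delta')
    also have "\<dots> = m v"
    proof (cases "v \<in> ?R")
      case False
      then have "\<phi> -` {v} = {}" by auto
      then have "p v = 0" by (simp add: p_def)
      then show ?thesis using False mzero by simp
    qed simp
    finally show ?thesis .
  qed
  show "\<And>v. measure \<nu> (\<phi> -` {v}) = m v" by (rule cellm)
  have total: "emeasure \<nu> UNIV = 1"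
  proof -
    have "measure \<nu> UNIV = integral\<^sup>L Pn (\<lambda>x. D (\<phi> x) * indicator UNIV x)"
      by (rule meas) simp
    also have "\<dots> = integral\<^sup>L Pn (\<lambda>x. D (\<phi> x))" by simp
    also have "\<dots> = (\<Sum>u\<in>?R. D u * p u)"
      unfolding p_def by (rule cell_integral(2)[OF fin cs Pn])
    also have "\<dots> = 1" using sumM by (simp add: Dp)
    finally have "measure \<nu> UNIV = 1" .
    moreover have "emeasure \<nu> UNIV \<noteq> \<infinity>"
    proof -
      have "emeasure \<nu> UNIV = (\<integral>\<^sup>+ x. ennreal (D (\<phi> x)) * indicator UNIV x \<partial>Pn)"
        unfolding \<nu>_eq by (rule emeasure_density) (auto simp: Pn_sets)
      also have "\<dots> \<le> (\<integral>\<^sup>+ x. ennreal (1 / \<alpha>) \<partial>Pn)"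
        by (intro nn_integral_mono) (simp add: Da ennreal_leI)
      also have "\<dots> < \<infinity>"
      proof -
        interpret prob_space Pn using Pn by (rule probs_prob)
        show ?thesis by (simp add: emeasure_eq_measure ennreal_mult_less_top)
      qed
      finally show ?thesis by simp
    qed
    ultimately show ?thesis by (simp add: emeasure_eq_ennreal_measure)
  qed
  have \<nu>_sets: "sets \<nu> = sets borel" unfolding \<nu>_eq using Pn_sets by simp
  have \<nu>_space: "space \<nu> = UNIV" unfolding \<nu>_eq using probs_space[OF Pn] by simp
  have \<nu>_prob: "prob_space \<nu>" by (rule prob_spaceI) (simp add: \<nu>_space total)
  show "\<nu> \<in> trimming \<alpha> Pn"
    unfolding trimming_def probs_def
  proof (intro CollectI conjI ballI \<nu>_sets \<nu>_prob)
    fix B :: "'a set" assume B: "B \<in> sets borel"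
    interpret Pp: prob_space Pn using Pn by (rule probs_prob)
    have B': "B \<in> sets Pn" using B Pn_sets by simp
    have int: "integrable Pn (\<lambda>x. D (\<phi> x) * indicator B x)"
      using integrable_mult_indicator[OF B' Dint] by (simp add: mult.commute)
    have "measure \<nu> B = integral\<^sup>L Pn (\<lambda>x. D (\<phi> x) * indicator B x)" by (rule meas[OF B])
    also have "\<dots> \<le> integral\<^sup>L Pn (\<lambda>x. (1 / \<alpha>) * indicator B x)"
      by (rule integral_mono[OF int]) (use B' Da in \<open>auto split: split_indicator simp: Pp.emeasure_eq_measure\<close>)
    also have "\<dots> = measure Pn B / \<alpha>" using probs_space[OF Pn] by simp
    finally show "measure \<nu> B \<le> measure Pn B / \<alpha>" .
  qed
  show "(\<Sum>v\<in>?R. \<bar>m v - q v\<bar>) \<le> 2 * (\<Sum>v\<in>?R. \<bar>w v - q v\<bar>)"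
  proof -
    have "(\<Sum>v\<in>?R. \<bar>m v - q v\<bar>) \<le> (\<Sum>v\<in>?R. \<bar>w v - q v\<bar> + t * (p v / \<alpha> - w v))"
    proof (rule sum_mono)
      fix v
      have "t * (p v / \<alpha> - w v) \<ge> 0" using t0 wp[of v] by simp
      then show "\<bar>m v - q v\<bar> \<le> \<bar>w v - q v\<bar> + t * (p v / \<alpha> - w v)"
        unfolding m_def abs_le_iff by (simp add: abs_if split: if_splits)
    qed
    also have "\<dots> = (\<Sum>v\<in>?R. \<bar>w v - q v\<bar>) + (1 - W)"
      using tprod sum_pa by (simp add: sum.distrib sum_distrib_left[symmetric])
    also have "1 - W = (\<Sum>v\<in>?R. \<bar>w v - q v\<bar>)"
    proof -
      have "(\<Sum>v\<in>?R. \<bar>w v - q v\<bar>) = (\<Sum>v\<in>?R. q v - w v)"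
        by (intro sum.cong refl) (metis abs_minus_commute abs_of_nonneg diff_ge_0_iff_ge wq)
      also have "\<dots> = 1 - W" unfolding W_def by (simp add: sum_subtractf sumQ)
      finally show ?thesis by simp
    qed
    finally show ?thesis by simp
  qed
qed

lemma diag_seq:
  fixes a :: "nat \<Rightarrow> nat \<Rightarrow> real"
  assumes lim: "\<And>k. a k \<longlonglongrightarrow> 0" and nn: "\<And>k n. 0 \<le> a k n"
  shows "\<exists>kn. filterlim kn at_top sequentially \<and> (\<lambda>n. a (kn n) n) \<longlonglongrightarrow> 0"
proof -
  have "\<forall>k. \<exists>N. \<forall>n\<ge>N. a k n < inverse (real (Suc k))"
  proof
    fix k
    from LIMSEQ_D[OF lim[of k], of "inverse (real (Suc k))"]
    obtain N where "\<forall>n\<ge>N. norm (a k n - 0) < inverse (real (Suc k))" by auto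
    then show "\<exists>N. \<forall>n\<ge>N. a k n < inverse (real (Suc k))" using nn by auto
  qed
  then obtain N where N: "\<And>k n. n \<ge> N k \<Longrightarrow> a k n < inverse (real (Suc k))" by metis
  define N' where "N' k = max (N k) k" for k
  define S where "S n = {j. j \<le> n \<and> N' j \<le> n}" for n
  define kn where "kn n = Max (insert 0 (S n))" for n
  have finS: "finite (S n)" for n unfolding S_def by (rule finite_subset[of _ "{..n}"]) auto
  have kn_ge: "j \<in> S n \<Longrightarrow> j \<le> kn n" for j n unfolding kn_def using finS by simp
  have kn_in: "kn n \<in> S n" if "n \<ge> N' 0" for n
  proof -
    have "0 \<in> S n" using that by (simp add: S_def)
    then have "insert 0 (S n) = S n" by auto
    moreover have "S n \<noteq> {}" using \<open>0 \<in> S n\<close> by auto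
    ultimately show ?thesis unfolding kn_def using Max_in[OF finS] by simp
  qed
  have fl: "filterlim kn at_top sequentially"
    unfolding filterlim_at_top
  proof
    fix Z :: nat
    show "eventually (\<lambda>n. Z \<le> kn n) sequentially"
      unfolding eventually_sequentially
    proof (intro exI[of _ "N' Z"] allI impI)
      fix n assume "N' Z \<le> n"
      then have "Z \<in> S n" unfolding S_def N'_def by auto
      then show "Z \<le> kn n" by (rule kn_ge)
    qed
  qed
  have inv: "(\<lambda>n. inverse (real (Suc (kn n)))) \<longlonglongrightarrow> 0"
    using filterlim_compose[OF LIMSEQ_inverse_real_of_nat fl] by (simp add: o_def)
  have "(\<lambda>n. a (kn n) n) \<longlonglongrightarrow> 0"
  proof (rule Lim_null_comparison[OF _ inv])
    show "eventually (\<lambda>n. norm (a (kn n) n) \<le> inverse (real (Suc (kn n)))) sequentially"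
      unfolding eventually_sequentially
    proof (intro exI[of _ "N' 0"] allI impI)
      fix n assume n: "N' 0 \<le> n"
      then have "kn n \<in> S n" by (rule kn_in)
      then have "N (kn n) \<le> n" unfolding S_def N'_def by auto
      then have "a (kn n) n < inverse (real (Suc (kn n)))" by (rule N)
      then show "norm (a (kn n) n) \<le> inverse (real (Suc (kn n)))" using nn by simp
    qed
  qed
  with fl show ?thesis by blast
qed

lemma construct_all:
  fixes \<phi> :: "nat \<Rightarrow> 'a::euclidean_space \<Rightarrow> 'c" and Pn :: "nat \<Rightarrow> 'a measure"
  assumes fin: "\<And>k. finite (range (\<phi> k))" and cs: "\<And>k v. \<phi> k -` {v} \<in> sets borel"
    and shr: "\<And>x e. e > 0 \<Longrightarrow> \<exists>K. \<forall>k\<ge>K. \<forall>y. \<phi> k y = \<phi> k x \<longrightarrow> dist y x < e"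
    and Pn: "\<And>n. n \<ge> 1 \<Longrightarrow> Pn n \<in> probs"
    and lim: "\<And>k v. v \<in> range (\<phi> k) \<Longrightarrow> (\<lambda>n. measure (Pn n) (\<phi> k -` {v})) \<longlonglongrightarrow> measure P (\<phi> k -` {v})"
    and Q: "Q \<in> trimming \<alpha> P" and a0: "0 < \<alpha>" and a1: "\<alpha> \<le> 1"
  shows "\<exists>\<mu>. (\<forall>n\<ge>1. \<mu> n \<in> trimming \<alpha> (Pn n)) \<and> weak_conv \<mu> Q"
proof -
  have Qp: "Q \<in> probs" and Qle: "\<And>B. B \<in> sets borel \<Longrightarrow> measure Q B \<le> measure P B / \<alpha>"
    using Q unfolding trimming_def by auto
  define p where "p k n v = measure (Pn n) (\<phi> k -` {v})" for k n v
  define q where "q k v = measure Q (\<phi> k -` {v})" for k v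
  define w where "w k n v = min (q k v) (p k n v / \<alpha>)" for k n v
  define W where "W k n = (\<Sum>v\<in>range (\<phi> k). w k n v)" for k n
  define t where "t k n = (1 - W k n) / (1 / \<alpha> - W k n)" for k n
  define m where "m k n v = w k n v + t k n * (p k n v / \<alpha> - w k n v)" for k n v
  define \<nu> where "\<nu> k n = (if n = 0 then Q else density (Pn n) (\<lambda>x. ennreal (m k n (\<phi> k x) / p k n (\<phi> k x))))" for k n
  have lc: "\<nu> k n \<in> trimming \<alpha> (Pn n) \<and> (\<forall>v. measure (\<nu> k n) (\<phi> k -` {v}) = m k n v) \<and>
      (\<Sum>v\<in>range (\<phi> k). \<bar>m k n v - q k v\<bar>) \<le> 2 * (\<Sum>v\<in>range (\<phi> k). \<bar>w k n v - q k v\<bar>)"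
    if n: "n \<ge> 1" for k n
  proof -
    note L = level_construct[OF fin[of k] cs[of k] Pn[OF n] Qp a0 a1]
    have nz: "n \<noteq> 0" using n by simp
    show ?thesis
      using L unfolding \<nu>_def m_def t_def W_def w_def p_def q_def using nz by simp
  qed
  define a where "a k n = (\<Sum>v\<in>range (\<phi> k). \<bar>measure (\<nu> k n) (\<phi> k -` {v}) - q k v\<bar>)" for k n
  have a_nn: "0 \<le> a k n" for k n unfolding a_def by (intro sum_nonneg) auto
  have a_lim: "a k \<longlonglongrightarrow> 0" for k
  proof -
    have wl: "(\<lambda>n. w k n v) \<longlonglongrightarrow> q k v" if v: "v \<in> range (\<phi> k)" for v
    proof -
      have "(\<lambda>n. w k n v) \<longlonglongrightarrow> min (q k v) (measure P (\<phi> k -` {v}) / \<alpha>)"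
        unfolding w_def p_def using a0 by (intro tendsto_intros lim[OF v]) auto
      moreover have "min (q k v) (measure P (\<phi> k -` {v}) / \<alpha>) = q k v"
        using Qle[OF cs[of k v]] unfolding q_def by simp
      ultimately show ?thesis by simp
    qed
    have "(\<lambda>n. 2 * (\<Sum>v\<in>range (\<phi> k). \<bar>w k n v - q k v\<bar>)) \<longlonglongrightarrow> 2 * (\<Sum>v\<in>range (\<phi> k). \<bar>q k v - q k v\<bar>)"
      by (intro tendsto_intros wl)
    then have bl: "(\<lambda>n. 2 * (\<Sum>v\<in>range (\<phi> k). \<bar>w k n v - q k v\<bar>)) \<longlonglongrightarrow> 0" by simp
    show ?thesis
    proof (rule Lim_null_comparison[OF _ bl])
      show "eventually (\<lambda>n. norm (a k n) \<le> 2 * (\<Sum>v\<in>range (\<phi> k). \<bar>w k n v - q k v\<bar>)) sequentially"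
        unfolding eventually_sequentially
      proof (intro exI[of _ 1] allI impI)
        fix n :: nat assume n: "1 \<le> n"
        have "a k n = (\<Sum>v\<in>range (\<phi> k). \<bar>m k n v - q k v\<bar>)"
          unfolding a_def using lc[OF n] by simp
        then show "norm (a k n) \<le> 2 * (\<Sum>v\<in>range (\<phi> k). \<bar>w k n v - q k v\<bar>)"
          using lc[OF n] a_nn[of k n] by simp
      qed
    qed
  qed
  obtain kn where kn: "filterlim kn at_top sequentially" and akn: "(\<lambda>n. a (kn n) n) \<longlonglongrightarrow> 0"
    using diag_seq[of a, OF a_lim a_nn] by blast
  define \<mu> where "\<mu> n = \<nu> (kn n) n" for n
  have mu_tr: "\<mu> n \<in> trimming \<alpha> (Pn n)" if "n \<ge> 1" for n
    unfolding \<mu>_def using lc[OF that] by simp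
  have mu_p: "\<mu> n \<in> probs" for n
  proof (cases "n = 0")
    case True then show ?thesis using Qp by (simp add: \<mu>_def \<nu>_def)
  next
    case False then show ?thesis using mu_tr[of n] by (simp add: trimming_def)
  qed
  have "weak_conv \<mu> Q"
  proof (rule weak_conv_cells[OF fin cs shr mu_p Qp kn])
    show "(\<lambda>n. \<Sum>v\<in>range (\<phi> (kn n)). \<bar>measure (\<mu> n) (\<phi> (kn n) -` {v}) - measure Q (\<phi> (kn n) -` {v})\<bar>) \<longlonglongrightarrow> 0"
      using akn unfolding a_def q_def \<mu>_def by simp
  qed
  with mu_tr show ?thesis by blast
qed

theorem theorem10:
  fixes M :: "'w measure" and X :: "nat \<Rightarrow> 'w \<Rightarrow> 'a::euclidean_space"
    and P :: "'a measure" and \<alpha> :: real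
  assumes "prob_space M"
    and "\<And>i. X i \<in> borel_measurable M"
    and "prob_space.indep_vars M (\<lambda>_. borel) X UNIV"
    and "\<And>i. distr M borel (X i) = P"
    and "P \<in> probs"
    and "0 < \<alpha>" and "\<alpha> \<le> 1"
  shows "AE \<omega> in M. trimming \<alpha> P \<subseteq> set_liminf (\<lambda>n. trimming \<alpha> (empirical X n \<omega>))"
proof -
  note pM = assms(1) and Xm = assms(2) and ind = assms(3) and dX = assms(4)
  note a0 = assms(6) and a1 = assms(7)
  interpret prob_space M by (rule pM)
  have one: "AE \<omega> in M. (\<lambda>n. measure (empirical X n \<omega>) (cellf k -` {v})) \<longlonglongrightarrow> measure P (cellf k -` {v})"
    for k :: nat and v :: "('a \<Rightarrow> int) option"
  proof -
    have "AE \<omega> in M. (\<lambda>n. (\<Sum>i<n. indicator (cellf k -` {v}) (X i \<omega>)) / real n) \<longlonglongrightarrow> measure P (cellf k -` {v})"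
      by (rule slln_ind[OF pM Xm ind dX cellf_sets])
    then show ?thesis
      by (rule AE_mp) (intro AE_I2 impI, simp add: emp_measure[OF cellf_sets])
  qed
  have all: "AE \<omega> in M. \<forall>k. \<forall>v\<in>range (cellf k :: 'a \<Rightarrow> _). (\<lambda>n. measure (empirical X n \<omega>) (cellf k -` {v})) \<longlonglongrightarrow> measure P (cellf k -` {v})"
  proof -
    have "AE \<omega> in M. \<forall>v\<in>range (cellf k :: 'a \<Rightarrow> _). (\<lambda>n. measure (empirical X n \<omega>) (cellf k -` {v})) \<longlonglongrightarrow> measure P (cellf k -` {v})" for k
      using one by (subst AE_ball_countable) (auto intro: countable_finite finite_cellf)
    then show ?thesis by (simp add: AE_all_countable)
  qed
  then show ?thesis
  proof (rule AE_mp, intro AE_I2 impI subsetI)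
    fix \<omega> Q
    assume H: "\<forall>k. \<forall>v\<in>range (cellf k :: 'a \<Rightarrow> _). (\<lambda>n. measure (empirical X n \<omega>) (cellf k -` {v})) \<longlonglongrightarrow> measure P (cellf k -` {v})"
      and Q: "Q \<in> trimming \<alpha> P"
    have "\<exists>\<mu>. (\<forall>n\<ge>1. \<mu> n \<in> trimming \<alpha> (empirical X n \<omega>)) \<and> weak_conv \<mu> Q"
    proof (rule construct_all[where \<phi>=cellf and Pn="\<lambda>n. empirical X n \<omega>", OF finite_cellf cellf_sets cellf_shrink _ _ Q a0 a1])
      show "\<And>n. 1 \<le> n \<Longrightarrow> empirical X n \<omega> \<in> probs" by (rule emp_probs) simp
      show "\<And>k v. v \<in> range (cellf k) \<Longrightarrow> (\<lambda>n. measure (empirical X n \<omega>) (cellf k -` {v})) \<longlonglongrightarrow> measure P (cellf k -` {v})"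
        using H by blast
    qed
    moreover have "Q \<in> probs" using Q by (simp add: trimming_def)
    ultimately show "Q \<in> set_liminf (\<lambda>n. trimming \<alpha> (empirical X n \<omega>))"
      unfolding set_liminf_def by blast
  qed
qed

end
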